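(* Let $u$ be a parking sorted configuration on $K_{m,n}$ (with arbitrary value $u_{a_m}\in\mathbb Z$ at the sink). Then $$\mathrm{xpara}(u)=(m-1)(n-1)+\mathrm{rank}(u)-\mathrm{degree}(u)\qquad\text{and}\qquad \mathrm{ypara}(u)=\mathrm{rank}(u)+1.$$
   Context: Let $m,n\ge 1$. $K_{m,n}$ is the complete bipartite graph with vertex set $V=A_m\sqcup B_n$, $A_m=\{a_1,\dots,a_m\}$, $B_n=\{b_1,\dots,b_n\}$, with exactly one edge $\{a_i,b_j\}$ for every $i,j$; $a_m$ is the sink. A configuration is a function $u:V\to\mathbb Z$; $\mathrm{degree}(u)=\sum_c u_c$. For $c\in V$ with graph degree $d_c$, $\Delta^{(c)}=d_c e_c-\sum_{c'\text{ adjacent to }c}e_{c'}$, with $e_c$ the indicator configuration of $c$; $\Delta^{(C)}=\sum_{c\in C}\Delta^{(c)}$. Toppling equivalence: difference in the integer span of the $\Delta^{(c)}$. Effective: toppling equivalent to a non-negative configuration. $\mathrm{rank}(u)=-1+\min\{\mathrm{degree}(f): f\ge0,\ u-f\text{ not effective}\}$. $u$ is parking if $u_c\ge0$ for $c\ne a_m$ and for every non-empty $C\subseteq V\setminus\{a_m\}$, $u-\Delta^{(C)}$ has a negative value at a vertex other than $a_m$; sorted if $u_{a_1}\le\dots\le u_{a_{m-1}}$ and $u_{b_1}\le\dots\le u_{b_n}$. The $r$-vector of a parking sorted $u$ is $(r_1,\dots,r_n)$, $r_i=u_{b_i}+1-\#\{j\in\{1,\dots,m-1\}: u_{a_j}+1\le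 i-1\}$ (one has $-m+2\le r_i\le 1$). Labels: for $\sigma\in\mathbb Z$ write $\sigma=qn+t$ with $q,t\in\mathbb Z$, $0\le t<n$; call $\sigma$ right (for $u$) if $q+r_{t+1}\ge 1$ and left otherwise (in the paper, $\sigma$ labels a cell of the cylindric diagram, lying to the right resp. left of the red path). Define $\mathrm{xpara}(u)=\#\{\sigma\in\mathbb Z:\sigma>u_{a_m},\ \sigma\text{ left}\}$ (unvisited left cells) and $\mathrm{ypara}(u)=\#\{\sigma\in\mathbb Z:\sigma\le u_{a_m},\ \sigma\text{ right}\}$ (visited right cells); both are finite. *)

theory Defs
  imports Main
begin

text \<open>Vertices of K_{m,n}: A i (1 \<le> i \<le> m) and B j (1 \<le> j \<le> n). The sink is A m.
  Configurations are functions vert \<Rightarrow> int; only their values on the vertex set matter.\<close>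

datatype vert = A nat | B nat

definition verts :: "nat \<Rightarrow> nat \<Rightarrow> vert set" where
  "verts m n = A ` {1..m} \<union> B ` {1..n}"

definition adj :: "nat \<Rightarrow> nat \<Rightarrow> vert \<Rightarrow> vert \<Rightarrow> bool" where
  "adj m n x y \<longleftrightarrow>
     (\<exists>i\<in>{1..m}. \<exists>j\<in>{1..n}. (x = A i \<and> y = B j) \<or> (x = B j \<and> y = A i))"

definition gdeg :: "nat \<Rightarrow> nat \<Rightarrow> vert \<Rightarrow> int" where
  "gdeg m n c = int (card {c' \<in> verts m n. adj m n c c'})"

definition conf_degree :: "nat \<Rightarrow> nat \<Rightarrow> (vert \<Rightarrow> int) \<Rightarrow> int" where
  "conf_degree m n u = (\<Sum>c\<in>verts m n. u c)"

definition Delta :: "nat \<Rightarrow> nat \<Rightarrow> vert \<Rightarrow> vert \<Rightarrow> int" where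
  "Delta m n c = (\<lambda>x. (if x = c then gdeg m n c else 0) - (if adj m n c x then 1 else 0))"

definition DeltaSet :: "nat \<Rightarrow> nat \<Rightarrow> vert set \<Rightarrow> vert \<Rightarrow> int" where
  "DeltaSet m n C = (\<lambda>x. \<Sum>c\<in>C. Delta m n c x)"

definition toppling_equiv :: "nat \<Rightarrow> nat \<Rightarrow> (vert \<Rightarrow> int) \<Rightarrow> (vert \<Rightarrow> int) \<Rightarrow> bool" where
  "toppling_equiv m n u v \<longleftrightarrow>
     (\<exists>k :: vert \<Rightarrow> int. \<forall>x\<in>verts m n. u x - v x = (\<Sum>c\<in>verts m n. k c * Delta m n c x))"

definition effective :: "nat \<Rightarrow> nat \<Rightarrow> (vert \<Rightarrow> int) \<Rightarrow> bool" where
  "effective m n u \<longleftrightarrow>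
     (\<exists>f. (\<forall>x\<in>verts m n. f x \<ge> 0) \<and> toppling_equiv m n u f)"

definition conf_rank :: "nat \<Rightarrow> nat \<Rightarrow> (vert \<Rightarrow> int) \<Rightarrow> int" where
  "conf_rank m n u = -1 + int (LEAST d :: nat. \<exists>f. (\<forall>x\<in>verts m n. f x \<ge> 0)
       \<and> conf_degree m n f = int d \<and> \<not> effective m n (\<lambda>x. u x - f x))"

definition parking :: "nat \<Rightarrow> nat \<Rightarrow> (vert \<Rightarrow> int) \<Rightarrow> bool" where
  "parking m n u \<longleftrightarrow>
     (\<forall>c\<in>verts m n - {A m}. u c \<ge> 0) \<and>
     (\<forall>C. C \<noteq> {} \<longrightarrow> C \<subseteq> verts m n - {A m} \<longrightarrow>
        (\<exists>x\<in>verts m n - {A m}. u x - DeltaSet m n C x < 0))"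

definition sorted_conf :: "nat \<Rightarrow> nat \<Rightarrow> (vert \<Rightarrow> int) \<Rightarrow> bool" where
  "sorted_conf m n u \<longleftrightarrow>
     (\<forall>i j. 1 \<le> i \<longrightarrow> i \<le> j \<longrightarrow> j \<le> m - 1 \<longrightarrow> u (A i) \<le> u (A j)) \<and>
     (\<forall>i j. 1 \<le> i \<longrightarrow> i \<le> j \<longrightarrow> j \<le> n \<longrightarrow> u (B i) \<le> u (B j))"

text \<open>r-vector, indexed by i \<in> {1..n}.\<close>
definition rvec :: "nat \<Rightarrow> nat \<Rightarrow> (vert \<Rightarrow> int) \<Rightarrow> nat \<Rightarrow> int" where
  "rvec m n u i = u (B i) + 1 - int (card {j \<in> {1..m - 1}. u (A j) + 1 \<le> int i - 1})"

text \<open>sigma = q n + t with 0 \<le> t < n, i.e. q = sigma div n, t = sigma mod n.\<close>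
definition is_right :: "nat \<Rightarrow> nat \<Rightarrow> (vert \<Rightarrow> int) \<Rightarrow> int \<Rightarrow> bool" where
  "is_right m n u \<sigma> \<longleftrightarrow>
     \<sigma> div int n + rvec m n u (nat (\<sigma> mod int n) + 1) \<ge> 1"

definition xpara :: "nat \<Rightarrow> nat \<Rightarrow> (vert \<Rightarrow> int) \<Rightarrow> nat" where
  "xpara m n u = card {\<sigma> :: int. \<sigma> > u (A m) \<and> \<not> is_right m n u \<sigma>}"

definition ypara :: "nat \<Rightarrow> nat \<Rightarrow> (vert \<Rightarrow> int) \<Rightarrow> nat" where
  "ypara m n u = card {\<sigma> :: int. \<sigma> \<le> u (A m) \<and> is_right m n u \<sigma>}"

end

theory Submission
  imports Defs
begin


lemma verts_eq: "verts m n = A ` {1..m} \<union> B ` {1..n}" by (simp add: verts_def)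

lemma sum_verts: "sum g (verts m n) = (\<Sum>i\<in>{1..m}. g (A i)) + (\<Sum>j\<in>{1..n}. g (B j))"
proof -
  have d: "A ` {1..m} \<inter> B ` {1..n} = {}" by auto
  have "sum g (verts m n) = sum g (A ` {1..m}) + sum g (B ` {1..n})"
    unfolding verts_def by (rule sum.union_disjoint) (use d in auto)
  also have "sum g (A ` {1..m}) = (\<Sum>i\<in>{1..m}. g (A i))"
    by (subst sum.reindex) (auto simp: inj_on_def)
  also have "sum g (B ` {1..n}) = (\<Sum>j\<in>{1..n}. g (B j))"
    by (subst sum.reindex) (auto simp: inj_on_def)
  finally show ?thesis .
qed

lemma finite_verts[simp]: "finite (verts m n)" by (simp add: verts_def)

lemma gdeg_A: "i \<in> {1..m} \<Longrightarrow> gdeg m n (A i) = int n"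
proof -
  assume i: "i \<in> {1..m}"
  have "{c' \<in> verts m n. adj m n (A i) c'} = B ` {1..n}"
    using i by (auto simp: verts_def adj_def)
  then show ?thesis by (simp add: gdeg_def card_image inj_on_def)
qed

lemma gdeg_B: "j \<in> {1..n} \<Longrightarrow> gdeg m n (B j) = int m"
proof -
  assume j: "j \<in> {1..n}"
  have "{c' \<in> verts m n. adj m n (B j) c'} = A ` {1..m}"
    using j by (auto simp: verts_def adj_def)
  then show ?thesis by (simp add: gdeg_def card_image inj_on_def)
qed

lemma lap_A:
  assumes i: "i \<in> {1..m}"
  shows "(\<Sum>c\<in>verts m n. k c * Delta m n c (A i)) = int n * k (A i) - (\<Sum>j\<in>{1..n}. k (B j))"
proof -
  have 1: "(\<Sum>i'\<in>{1..m}. k (A i') * Delta m n (A i') (A i)) = int n * k (A i)"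
  proof -
    have "(\<Sum>i'\<in>{1..m}. k (A i') * Delta m n (A i') (A i)) =
          (\<Sum>i'\<in>{1..m}. if i' = i then k (A i) * int n else 0)"
      by (rule sum.cong) (auto simp: Delta_def adj_def gdeg_A[OF i])
    also have "\<dots> = int n * k (A i)" using i by simp
    finally show ?thesis .
  qed
  have 2: "(\<Sum>j\<in>{1..n}. k (B j) * Delta m n (B j) (A i)) = - (\<Sum>j\<in>{1..n}. k (B j))"
  proof -
    have "(\<Sum>j\<in>{1..n}. k (B j) * Delta m n (B j) (A i)) = (\<Sum>j\<in>{1..n}. - k (B j))"
      by (rule sum.cong) (use i in \<open>auto simp: Delta_def adj_def\<close>)
    then show ?thesis by (simp add: sum_negf)
  qed
  show ?thesis unfolding sum_verts 1 2 by simp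
qed

lemma lap_B:
  assumes j: "j \<in> {1..n}"
  shows "(\<Sum>c\<in>verts m n. k c * Delta m n c (B j)) = int m * k (B j) - (\<Sum>i\<in>{1..m}. k (A i))"
proof -
  have 1: "(\<Sum>j'\<in>{1..n}. k (B j') * Delta m n (B j') (B j)) = int m * k (B j)"
  proof -
    have "(\<Sum>j'\<in>{1..n}. k (B j') * Delta m n (B j') (B j)) =
          (\<Sum>j'\<in>{1..n}. if j' = j then k (B j) * int m else 0)"
      by (rule sum.cong) (auto simp: Delta_def adj_def gdeg_B[OF j])
    also have "\<dots> = int m * k (B j)" using j by simp
    finally show ?thesis .
  qed
  have 2: "(\<Sum>i\<in>{1..m}. k (A i) * Delta m n (A i) (B j)) = - (\<Sum>i\<in>{1..m}. k (A i))"
  proof -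
    have "(\<Sum>i\<in>{1..m}. k (A i) * Delta m n (A i) (B j)) = (\<Sum>i\<in>{1..m}. - k (A i))"
      by (rule sum.cong) (use j in \<open>auto simp: Delta_def adj_def\<close>)
    then show ?thesis by (simp add: sum_negf)
  qed
  show ?thesis unfolding sum_verts 1 2 by simp
qed

definition FF :: "nat \<Rightarrow> nat \<Rightarrow> (vert \<Rightarrow> int) \<Rightarrow> int \<Rightarrow> int" where
  "FF m n D b = (\<Sum>i\<in>{1..m}. (D (A i) + b) div int n)"
definition GG :: "nat \<Rightarrow> nat \<Rightarrow> (vert \<Rightarrow> int) \<Rightarrow> int \<Rightarrow> int" where
  "GG m n D a = (\<Sum>j\<in>{1..n}. (D (B j) + a) div int m)"

lemma le_div_of_mult: "(0::int) < n \<Longrightarrow> n * k \<le> z \<Longrightarrow> k \<le> z div n"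
proof -
  assume n: "0 < n" and h: "n * k \<le> z"
  have "k = (n * k) div n" using n by simp
  also have "\<dots> \<le> z div n" using h n by (intro zdiv_mono1) auto
  finally show ?thesis .
qed

lemma mult_div_le: "(0::int) < n \<Longrightarrow> n * (z div n) \<le> z"
proof -
  assume n: "0 < n"
  have "z = n * (z div n) + z mod n" by simp
  moreover have "z mod n \<ge> 0" using n by simp
  ultimately show ?thesis by linarith
qed

lemma effective_iff:
  assumes m: "m \<ge> 1" and n: "n \<ge> 1"
  shows "effective m n D \<longleftrightarrow> (\<exists>a b. a \<le> FF m n D b \<and> b \<le> GG m n D a)"
proof
  assume "effective m n D"
  then obtain f k where f: "\<forall>x\<in>verts m n. f x \<ge> 0"
    and k: "\<forall>x\<in>verts m n. D x - f x = (\<Sum>c\<in>verts m n. k c * Delta m n c x)"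
    unfolding effective_def toppling_equiv_def by blast
  define a where "a = (\<Sum>i\<in>{1..m}. k (A i))"
  define b where "b = (\<Sum>j\<in>{1..n}. k (B j))"
  have "a \<le> FF m n D b" unfolding a_def FF_def
  proof (rule sum_mono)
    fix i assume i: "i \<in> {1..m}"
    have "A i \<in> verts m n" using i by (simp add: verts_def)
    then have "D (A i) - f (A i) = int n * k (A i) - b" using k lap_A[OF i] b_def by simp
    moreover have "f (A i) \<ge> 0" using f \<open>A i \<in> verts m n\<close> by blast
    ultimately have "int n * k (A i) \<le> D (A i) + b" by linarith
    then show "k (A i) \<le> (D (A i) + b) div int n" using n by (intro le_div_of_mult) auto
  qed
  moreover have "b \<le> GG m n D a" unfolding b_def GG_def
  proof (rule sum_mono)
    fix j assume j: "j \<in> {1..n}"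
    have "B j \<in> verts m n" using j by (simp add: verts_def)
    then have "D (B j) - f (B j) = int m * k (B j) - a" using k lap_B[OF j] a_def by simp
    moreover have "f (B j) \<ge> 0" using f \<open>B j \<in> verts m n\<close> by blast
    ultimately have "int m * k (B j) \<le> D (B j) + a" by linarith
    then show "k (B j) \<le> (D (B j) + a) div int m" using m by (intro le_div_of_mult) auto
  qed
  ultimately show "\<exists>a b. a \<le> FF m n D b \<and> b \<le> GG m n D a" by blast
next
  assume "\<exists>a b. a \<le> FF m n D b \<and> b \<le> GG m n D a"
  then obtain a b where ab: "a \<le> FF m n D b" "b \<le> GG m n D a" by blast
  define k where "k = (\<lambda>v. case v of
      A i \<Rightarrow> (D (A i) + b) div int n - (if i = 1 then FF m n D b - a else 0)
    | B j \<Rightarrow> (D (B j) + a) div int m - (if j = 1 then GG m n D a - b else 0))"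
  have sa: "(\<Sum>i\<in>{1..m}. k (A i)) = a"
  proof -
    have "(\<Sum>i\<in>{1..m}. k (A i)) = (\<Sum>i\<in>{1..m}. (D (A i) + b) div int n)
           - (\<Sum>i\<in>{1..m}. (if i = 1 then FF m n D b - a else 0))"
      by (simp add: k_def sum_subtractf)
    also have "\<dots> = a" using m by (simp add: FF_def)
    finally show ?thesis .
  qed
  have sb: "(\<Sum>j\<in>{1..n}. k (B j)) = b"
  proof -
    have "(\<Sum>j\<in>{1..n}. k (B j)) = (\<Sum>j\<in>{1..n}. (D (B j) + a) div int m)
           - (\<Sum>j\<in>{1..n}. (if j = 1 then GG m n D a - b else 0))"
      by (simp add: k_def sum_subtractf)
    also have "\<dots> = b" using n by (simp add: GG_def)
    finally show ?thesis .
  qed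
  define f where "f = (\<lambda>x. D x - (\<Sum>c\<in>verts m n. k c * Delta m n c x))"
  have "\<forall>x\<in>verts m n. f x \<ge> 0"
  proof
    fix x assume "x \<in> verts m n"
    then consider i where "i \<in> {1..m}" "x = A i" | j where "j \<in> {1..n}" "x = B j"
      by (auto simp: verts_def)
    then show "f x \<ge> 0"
    proof cases
      case (1 i)
      have "k (A i) \<le> (D (A i) + b) div int n" using ab by (simp add: k_def)
      then have "int n * k (A i) \<le> int n * ((D (A i) + b) div int n)" by (simp add: mult_left_mono)
      also have "\<dots> \<le> D (A i) + b" using n by (intro mult_div_le) auto
      finally have "int n * k (A i) \<le> D (A i) + b" .
      moreover have "f (A i) = D (A i) - (int n * k (A i) - b)" unfolding f_def lap_A[OF 1(1)] sb ..
      ultimately show ?thesis using 1 by simp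
    next
      case (2 j)
      have "k (B j) \<le> (D (B j) + a) div int m" using ab by (simp add: k_def)
      then have "int m * k (B j) \<le> int m * ((D (B j) + a) div int m)" by (simp add: mult_left_mono)
      also have "\<dots> \<le> D (B j) + a" using m by (intro mult_div_le) auto
      finally have "int m * k (B j) \<le> D (B j) + a" .
      moreover have "f (B j) = D (B j) - (int m * k (B j) - a)" unfolding f_def lap_B[OF 2(1)] sa ..
      ultimately show ?thesis using 2 by simp
    qed
  qed
  moreover have "toppling_equiv m n D f"
    unfolding toppling_equiv_def f_def by (rule exI[of _ k]) simp
  ultimately show "effective m n D" unfolding effective_def by (intro exI[of _ f] conjI)
qed




definition RR :: "nat \<Rightarrow> nat \<Rightarrow> (vert \<Rightarrow> int) \<Rightarrow> (int \<times> int) set" where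
  "RR m n D = {(a, b). a \<le> FF m n D b \<and> b \<le> GG m n D a}"
definition SS :: "nat \<Rightarrow> nat \<Rightarrow> (vert \<Rightarrow> int) \<Rightarrow> (int \<times> int) set" where
  "SS m n D = {(a, b). (a, b) \<in> RR m n D \<and> 1 - int n \<le> b \<and> b \<le> 0}"
definition YY :: "nat \<Rightarrow> nat \<Rightarrow> (vert \<Rightarrow> int) \<Rightarrow> nat" where
  "YY m n D = card (SS m n D)"

lemma FF_shift: "n \<ge> 1 \<Longrightarrow> FF m n D (b + k * int n) = FF m n D b + k * int m"
proof -
  assume n: "n \<ge> 1"
  have "FF m n D (b + k * int n) = (\<Sum>i\<in>{1..m}. k + (D (A i) + b) div int n)"
    unfolding FF_def
    by (rule sum.cong) (use n in \<open>auto simp: add.assoc[symmetric]\<close>)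
  also have "\<dots> = FF m n D b + k * int m" by (simp add: FF_def sum.distrib)
  finally show ?thesis .
qed

lemma GG_shift: "m \<ge> 1 \<Longrightarrow> GG m n D (a + k * int m) = GG m n D a + k * int n"
proof -
  assume m: "m \<ge> 1"
  have "GG m n D (a + k * int m) = (\<Sum>j\<in>{1..n}. k + (D (B j) + a) div int m)"
    unfolding GG_def
    by (rule sum.cong) (use m in \<open>auto simp: add.assoc[symmetric]\<close>)
  also have "\<dots> = GG m n D a + k * int n" by (simp add: GG_def sum.distrib)
  finally show ?thesis .
qed

lemma RR_shift:
  assumes "m \<ge> 1" "n \<ge> 1" "(a, b) \<in> RR m n D"
  shows "(a + k * int m, b + k * int n) \<in> RR m n D"
  using assms FF_shift[of n m D b k] GG_shift[of m n D a k] by (auto simp: RR_def)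

lemma FF_mono: "b \<le> b' \<Longrightarrow> FF m n D b \<le> FF m n D b'"
  unfolding FF_def by (cases "n = 0") (auto intro!: sum_mono zdiv_mono1)
lemma GG_mono: "a \<le> a' \<Longrightarrow> GG m n D a \<le> GG m n D a'"
  unfolding GG_def by (cases "m = 0") (auto intro!: sum_mono zdiv_mono1)

lemma FF_le: "n \<ge> 1 \<Longrightarrow> (\<forall>x\<in>verts m n. D' x \<le> D x) \<Longrightarrow> FF m n D' b \<le> FF m n D b"
  unfolding FF_def by (intro sum_mono zdiv_mono1) (auto simp: verts_def)
lemma GG_le: "m \<ge> 1 \<Longrightarrow> (\<forall>x\<in>verts m n. D' x \<le> D x) \<Longrightarrow> GG m n D' a \<le> GG m n D a"
  unfolding GG_def by (intro sum_mono zdiv_mono1) (auto simp: verts_def)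

lemma FF_cong: "(\<forall>x\<in>verts m n. D' x = D x) \<Longrightarrow> FF m n D' = FF m n D"
  unfolding FF_def by (intro ext sum.cong) (auto simp: verts_def)
lemma GG_cong: "(\<forall>x\<in>verts m n. D' x = D x) \<Longrightarrow> GG m n D' = GG m n D"
  unfolding GG_def by (intro ext sum.cong) (auto simp: verts_def)
lemma SS_cong: "(\<forall>x\<in>verts m n. D' x = D x) \<Longrightarrow> SS m n D' = SS m n D"
  unfolding SS_def RR_def using FF_cong[of m n D' D] GG_cong[of m n D' D] by simp

lemma RR_le:
  assumes "m \<ge> 1" "n \<ge> 1" "\<forall>x\<in>verts m n. D' x \<le> D x"
  shows "RR m n D' \<subseteq> RR m n D"
proof
  fix p assume "p \<in> RR m n D'"
  then obtain a b where p: "p = (a, b)" "a \<le> FF m n D' b" "b \<le> GG m n D' a"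
    by (auto simp: RR_def)
  have "a \<le> FF m n D b" using p FF_le[of n m D' D b] assms by linarith
  moreover have "b \<le> GG m n D a" using p GG_le[of m n D' D a] assms by linarith
  ultimately show "p \<in> RR m n D" using p by (simp add: RR_def)
qed
lemma SS_le: "m \<ge> 1 \<Longrightarrow> n \<ge> 1 \<Longrightarrow> (\<forall>x\<in>verts m n. D' x \<le> D x) \<Longrightarrow> SS m n D' \<subseteq> SS m n D"
  unfolding SS_def using RR_le[of m n D' D] by blast

lemma window_exists:
  assumes n: "n \<ge> 1"
  obtains k where "1 - int n \<le> b + k * int n" "b + k * int n \<le> 0"
proof -
  define q where "q = (b + int n - 1) div int n"
  have e: "b + int n - 1 = int n * q + (b + int n - 1) mod int n" unfolding q_def by simp
  have "0 \<le> (b + int n - 1) mod int n" "(b + int n - 1) mod int n < int n" using n by simp_all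
  then have "1 - int n \<le> b + (- q) * int n" "b + (- q) * int n \<le> 0" using e by (simp_all add: algebra_simps)
  then show ?thesis by (rule that)
qed

lemma RR_SS:
  assumes m: "m \<ge> 1" and n: "n \<ge> 1" and ab: "(a, b) \<in> RR m n D"
  obtains k where "(a + k * int m, b + k * int n) \<in> SS m n D"
proof -
  obtain k where "1 - int n \<le> b + k * int n" "b + k * int n \<le> 0" using window_exists[OF n] by blast
  then show ?thesis using RR_shift[OF m n ab, of k] that by (auto simp: SS_def)
qed

lemma SS_finite:
  assumes m: "m \<ge> 1" and n: "n \<ge> 1"
  shows "finite (SS m n D)"
proof -
  define L where "L = - (\<Sum>j\<in>{1..n}. \<bar>D (B j)\<bar>)"
  have lo: "a \<ge> L" if "(a, b) \<in> SS m n D" for a b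
  proof (rule ccontr)
    assume "\<not> a \<ge> L"
    then have "\<forall>j\<in>{1..n}. D (B j) + a < 0"
    proof (intro ballI)
      fix j assume j: "j \<in> {1..n}"
      have "\<bar>D (B j)\<bar> \<le> (\<Sum>j\<in>{1..n}. \<bar>D (B j)\<bar>)"
        using j by (intro member_le_sum) auto
      then show "D (B j) + a < 0" using \<open>\<not> a \<ge> L\<close> unfolding L_def by linarith
    qed
    then have "GG m n D a \<le> (\<Sum>j\<in>{1..n}. -1)" unfolding GG_def
    proof (intro sum_mono)
      fix j assume "j \<in> {1..n}"
      then have "D (B j) + a < 0" using \<open>\<forall>j\<in>{1..n}. D (B j) + a < 0\<close> by blast
      then have "(D (B j) + a) div int m < 0" using m by (intro div_neg_pos_less0) auto
      then show "(D (B j) + a) div int m \<le> -1" by linarith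
    qed
    then have "GG m n D a \<le> - int n" by simp
    then show False using that by (auto simp: SS_def RR_def)
  qed
  have hi: "a \<le> FF m n D 0" if "(a, b) \<in> SS m n D" for a b
    using that FF_mono[of b 0 m n D] by (auto simp: SS_def RR_def)
  have "SS m n D \<subseteq> {L..FF m n D 0} \<times> {1 - int n..0}"
    using lo hi by (auto simp: SS_def)
  then show ?thesis by (rule finite_subset) auto
qed

lemma effective_SS:
  assumes m: "m \<ge> 1" and n: "n \<ge> 1"
  shows "effective m n D \<longleftrightarrow> SS m n D \<noteq> {}"
proof
  assume "effective m n D"
  then obtain a b where "(a, b) \<in> RR m n D" using effective_iff[OF m n] by (auto simp: RR_def)
  then show "SS m n D \<noteq> {}" using RR_SS[OF m n] by blast
next
  assume "SS m n D \<noteq> {}"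
  then show "effective m n D" using effective_iff[OF m n] by (auto simp: SS_def RR_def)
qed




definition sub1 :: "(vert \<Rightarrow> int) \<Rightarrow> vert \<Rightarrow> vert \<Rightarrow> int" where
  "sub1 D v = (\<lambda>x. D x - (if x = v then 1 else 0))"

lemma divm1: "(0::int) < n \<Longrightarrow> (z - 1) div n = z div n - (if z mod n = 0 then 1 else 0)"
proof -
  assume n: "0 < n"
  have e: "z = n * (z div n) + z mod n" by simp
  have r: "0 \<le> z mod n" "z mod n < n" using n by simp_all
  show ?thesis
  proof (cases "z mod n = 0")
    case True
    have "z - 1 = n * (z div n - 1) + (n - 1)" using e True by (simp add: algebra_simps)
    then have "(z - 1) div n = z div n - 1" by (rule int_div_pos_eq) (use n in auto)
    then show ?thesis using True by simp
  next
    case False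
    have "z - 1 = n * (z div n) + (z mod n - 1)" using e by simp
    then have "(z - 1) div n = z div n" by (rule int_div_pos_eq) (use r False in auto)
    then show ?thesis using False by simp
  qed
qed

lemma FF_sub_A:
  assumes i0: "i0 \<in> {1..m}" and n: "n \<ge> 1"
  shows "FF m n (sub1 D (A i0)) b = FF m n D b - (if (D (A i0) + b) mod int n = 0 then 1 else 0)"
proof -
  have "FF m n (sub1 D (A i0)) b = (\<Sum>i\<in>{1..m}. (D (A i) + b) div int n
      - (if i = i0 then (if (D (A i0) + b) mod int n = 0 then 1 else 0) else 0))"
    unfolding FF_def
  proof (rule sum.cong)
    fix i assume "i \<in> {1..m}"
    show "(sub1 D (A i0) (A i) + b) div int n = (D (A i) + b) div int n
      - (if i = i0 then (if (D (A i0) + b) mod int n = 0 then 1 else 0) else 0)"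
    proof (cases "i = i0")
      case True
      have e: "sub1 D (A i0) (A i) + b = (D (A i) + b) - 1" using True by (simp add: sub1_def)
      show ?thesis unfolding e using True n by (simp add: divm1)
    next
      case False
      then show ?thesis by (simp add: sub1_def)
    qed
  qed simp
  also have "\<dots> = FF m n D b - (if (D (A i0) + b) mod int n = 0 then 1 else 0)"
    using i0 by (simp add: sum_subtractf FF_def)
  finally show ?thesis .
qed

lemma GG_sub_B:
  assumes j0: "j0 \<in> {1..n}" and m: "m \<ge> 1"
  shows "GG m n (sub1 D (B j0)) a = GG m n D a - (if (D (B j0) + a) mod int m = 0 then 1 else 0)"
proof -
  have "GG m n (sub1 D (B j0)) a = (\<Sum>j\<in>{1..n}. (D (B j) + a) div int m
      - (if j = j0 then (if (D (B j0) + a) mod int m = 0 then 1 else 0) else 0))"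
    unfolding GG_def
  proof (rule sum.cong)
    fix j assume "j \<in> {1..n}"
    show "(sub1 D (B j0) (B j) + a) div int m = (D (B j) + a) div int m
      - (if j = j0 then (if (D (B j0) + a) mod int m = 0 then 1 else 0) else 0)"
    proof (cases "j = j0")
      case True
      have e: "sub1 D (B j0) (B j) + a = (D (B j) + a) - 1" using True by (simp add: sub1_def)
      show ?thesis unfolding e using True m by (simp add: divm1)
    next
      case False
      then show ?thesis by (simp add: sub1_def)
    qed
  qed simp
  also have "\<dots> = GG m n D a - (if (D (B j0) + a) mod int m = 0 then 1 else 0)"
    using j0 by (simp add: sum_subtractf GG_def)
  finally show ?thesis .
qed

lemma GG_sub_A: "GG m n (sub1 D (A i0)) = GG m n D"
  unfolding GG_def sub1_def by simp
lemma FF_sub_B: "FF m n (sub1 D (B j0)) = FF m n D"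
  unfolding FF_def sub1_def by simp

lemma sub1_le: "\<forall>x\<in>verts m n. sub1 D v x \<le> D x" by (simp add: sub1_def)

lemma small_dvd: "int n dvd x \<Longrightarrow> \<bar>x\<bar> < int n \<Longrightarrow> x = 0"
  using dvd_imp_le_int[of x "int n"] by auto

lemma card_diff_le1:
  assumes m: "m \<ge> 1" and n: "n \<ge> 1" and v: "v \<in> verts m n"
  shows "card (SS m n D - SS m n (sub1 D v)) \<le> 1"
proof -
  let ?T = "SS m n D - SS m n (sub1 D v)"
  have fin: "finite ?T" using SS_finite[OF m n] by blast
  from v consider i0 where "i0 \<in> {1..m}" "v = A i0" | j0 where "j0 \<in> {1..n}" "v = B j0"
    by (auto simp: verts_def)
  then have "\<forall>p\<in>?T. \<forall>q\<in>?T. p = q"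
  proof cases
    case (1 i0)
    have key: "a = FF m n D b \<and> (D (A i0) + b) mod int n = 0 \<and> 1 - int n \<le> b \<and> b \<le> 0"
      if "(a, b) \<in> ?T" for a b
    proof -
      have h: "a \<le> FF m n D b" "b \<le> GG m n D a" "1 - int n \<le> b" "b \<le> 0"
        using that by (auto simp: SS_def RR_def)
      have "\<not> (a \<le> FF m n (sub1 D v) b \<and> b \<le> GG m n (sub1 D v) a)"
        using that h by (auto simp: SS_def RR_def)
      then have "\<not> a \<le> FF m n (sub1 D v) b" using h 1 by (simp add: GG_sub_A)
      then show ?thesis using h FF_sub_A[OF 1(1) n, of D b] 1 by (auto split: if_splits)
    qed
    show ?thesis
    proof (intro ballI)
      fix p q assume p: "p \<in> ?T" and q: "q \<in> ?T"
      obtain a b where pe: "p = (a, b)" by force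
      obtain a' b' where qe: "q = (a', b')" by force
      have kp: "a = FF m n D b" "(D (A i0) + b) mod int n = 0" "1 - int n \<le> b" "b \<le> 0"
        using key p pe by auto
      have kq: "a' = FF m n D b'" "(D (A i0) + b') mod int n = 0" "1 - int n \<le> b'" "b' \<le> 0"
        using key q qe by auto
      have "(D (A i0) + b) mod int n = (D (A i0) + b') mod int n"
        using kp(2) kq(2) by simp
      then have "int n dvd (D (A i0) + b) - (D (A i0) + b')"
        by (rule mod_eq_dvd_iff[THEN iffD1])
      then have "int n dvd b - b'" by simp
      then have "b - b' = 0" using kp kq by (intro small_dvd) auto
      then show "p = q" using pe qe kp kq by simp
    qed
  next
    case (2 j0)
    have key: "b = GG m n D a \<and> (D (B j0) + a) mod int m = 0 \<and> 1 - int n \<le> b \<and> b \<le> 0"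
      if "(a, b) \<in> ?T" for a b
    proof -
      have h: "a \<le> FF m n D b" "b \<le> GG m n D a" "1 - int n \<le> b" "b \<le> 0"
        using that by (auto simp: SS_def RR_def)
      have "\<not> (a \<le> FF m n (sub1 D v) b \<and> b \<le> GG m n (sub1 D v) a)"
        using that h by (auto simp: SS_def RR_def)
      then have "\<not> b \<le> GG m n (sub1 D v) a" using h 2 by (simp add: FF_sub_B)
      then show ?thesis using h GG_sub_B[OF 2(1) m, of D a] 2 by (auto split: if_splits)
    qed
    show ?thesis
    proof (intro ballI)
      fix p q assume p: "p \<in> ?T" and q: "q \<in> ?T"
      obtain a b where pe: "p = (a, b)" by force
      obtain a' b' where qe: "q = (a', b')" by force
      have kp: "b = GG m n D a" "(D (B j0) + a) mod int m = 0" "1 - int n \<le> b" "b \<le> 0"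
        using key p pe by auto
      have kq: "b' = GG m n D a'" "(D (B j0) + a') mod int m = 0" "1 - int n \<le> b'" "b' \<le> 0"
        using key q qe by auto
      have "(D (B j0) + a) mod int m = (D (B j0) + a') mod int m"
        using kp(2) kq(2) by simp
      then have "int m dvd (D (B j0) + a) - (D (B j0) + a')"
        by (rule mod_eq_dvd_iff[THEN iffD1])
      then have "int m dvd a - a'" by simp
      then obtain k where k: "a - a' = int m * k" by (auto elim: dvdE)
      then have "a = a' + k * int m" by (simp add: algebra_simps)
      then have "GG m n D a = GG m n D a' + k * int n" using GG_shift[OF m] by simp
      then have "b - b' = int n * k" using kp kq by simp
      then have "int n dvd b - b'" by simp
      then have "b - b' = 0" using kp kq by (intro small_dvd) auto
      then have "k = 0" using \<open>b - b' = int n * k\<close> n by simp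
      then show "p = q" using pe qe kp kq k by simp
    qed
  qed
  then show ?thesis using fin card_le_Suc0_iff_eq[OF fin] by simp
qed

lemma YY_sub:
  assumes m: "m \<ge> 1" and n: "n \<ge> 1" and v: "v \<in> verts m n"
  shows "YY m n D \<le> YY m n (sub1 D v) + 1"
proof -
  have "SS m n D \<subseteq> SS m n (sub1 D v) \<union> (SS m n D - SS m n (sub1 D v))" by blast
  then have "card (SS m n D) \<le> card (SS m n (sub1 D v) \<union> (SS m n D - SS m n (sub1 D v)))"
    by (intro card_mono) (use SS_finite[OF m n] in auto)
  also have "\<dots> \<le> card (SS m n (sub1 D v)) + card (SS m n D - SS m n (sub1 D v))"
    by (rule card_Un_le)
  finally show ?thesis using card_diff_le1[OF m n v, of D] unfolding YY_def by linarith
qed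

lemma YY_lower:
  assumes m: "m \<ge> 1" and n: "n \<ge> 1"
  shows "\<forall>f. (\<forall>x\<in>verts m n. 0 \<le> f x) \<longrightarrow> conf_degree m n f = int d \<longrightarrow>
          int (YY m n D) \<le> int (YY m n (\<lambda>x. D x - f x)) + int d"
proof (induction d)
  case 0
  show ?case
  proof (intro allI impI)
    fix f :: "vert \<Rightarrow> int" assume f: "\<forall>x\<in>verts m n. 0 \<le> f x" and d: "conf_degree m n f = int 0"
    have "\<forall>x\<in>verts m n. f x = 0"
      using d f sum_nonneg_eq_0_iff[of "verts m n" f] by (simp add: conf_degree_def)
    then have "SS m n (\<lambda>x. D x - f x) = SS m n D" by (intro SS_cong) auto
    then show "int (YY m n D) \<le> int (YY m n (\<lambda>x. D x - f x)) + int 0" by (simp add: YY_def)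
  qed
next
  case (Suc d)
  show ?case
  proof (intro allI impI)
    fix f :: "vert \<Rightarrow> int" assume f: "\<forall>x\<in>verts m n. 0 \<le> f x"
      and d: "conf_degree m n f = int (Suc d)"
    have "\<exists>v\<in>verts m n. f v > 0"
    proof (rule ccontr)
      assume "\<not> ?thesis"
      then have "\<forall>x\<in>verts m n. f x = 0" using f by force
      then have "conf_degree m n f = 0" by (simp add: conf_degree_def)
      then show False using d by simp
    qed
    then obtain v where v: "v \<in> verts m n" "f v > 0" by blast
    define f' where "f' = (\<lambda>x. f x - (if x = v then 1 else 0))"
    have f': "\<forall>x\<in>verts m n. 0 \<le> f' x" using f v by (auto simp: f'_def)
    have "conf_degree m n f' = conf_degree m n f - 1"
      using v by (simp add: f'_def conf_degree_def sum_subtractf)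
    then have d': "conf_degree m n f' = int d" using d by simp
    have IH: "int (YY m n D) \<le> int (YY m n (\<lambda>x. D x - f' x)) + int d"
      using Suc.IH f' d' by blast
    have eq: "(\<lambda>x. D x - f x) = sub1 (\<lambda>x. D x - f' x) v"
      by (simp add: sub1_def f'_def fun_eq_iff)
    have "YY m n (\<lambda>x. D x - f' x) \<le> YY m n (\<lambda>x. D x - f x) + 1"
      unfolding eq by (rule YY_sub[OF m n v(1)])
    then show "int (YY m n D) \<le> int (YY m n (\<lambda>x. D x - f x)) + int (Suc d)"
      using IH by linarith
  qed
qed




lemma exists_A:
  assumes m: "m \<ge> 1" and n: "n \<ge> 1" and ne: "SS m n D \<noteq> {}"
  shows "\<exists>i\<in>{1..m}. SS m n (sub1 D (A i)) \<noteq> SS m n D"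
proof -
  define val where "val = (\<lambda>p::int\<times>int. int n * fst p - int m * snd p)"
  define X where "X = (\<Sum>i\<in>{1..m}. D (A i))"
  obtain p0 where p0: "p0 \<in> RR m n D" using ne by (auto simp: SS_def)
  have bound: "val p \<le> X" if "p \<in> RR m n D" for p
  proof -
    obtain a b where pe: "p = (a, b)" by force
    have "a \<le> FF m n D b" using that pe by (simp add: RR_def)
    then have "int n * a \<le> int n * FF m n D b" by (simp add: mult_left_mono)
    also have "\<dots> = (\<Sum>i\<in>{1..m}. int n * ((D (A i) + b) div int n))"
      by (simp add: FF_def sum_distrib_left)
    also have "\<dots> \<le> (\<Sum>i\<in>{1..m}. D (A i) + b)"
      by (intro sum_mono mult_div_le) (use n in auto)
    also have "\<dots> = X + int m * b" by (simp add: X_def sum.distrib)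
    finally show ?thesis by (simp add: val_def pe)
  qed
  define W where "W = val ` RR m n D \<inter> {val p0..X}"
  have Wfin: "finite W" unfolding W_def by simp
  have Wne: "val p0 \<in> W" using p0 bound unfolding W_def by auto
  define M where "M = Max W"
  have "M \<in> W" unfolding M_def using Wfin Wne by (intro Max_in) auto
  then obtain p where p: "p \<in> RR m n D" "val p = M" unfolding W_def by auto
  have maxp: "val q \<le> M" if "q \<in> RR m n D" for q
  proof (cases "val q \<ge> val p0")
    case True
    then have "val q \<in> W" using that bound unfolding W_def by auto
    then show ?thesis unfolding M_def using Wfin by simp
  next
    case False
    have "val p0 \<le> M" unfolding M_def using Wfin Wne by simp
    then show ?thesis using False by linarith
  qed
  obtain a b where pe: "p = (a, b)" by force
  have ab: "a \<le> FF m n D b" "b \<le> GG m n D a" using p pe by (auto simp: RR_def)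
  have c1: "a = FF m n D b"
  proof (rule ccontr)
    assume "a \<noteq> FF m n D b"
    then have "a + 1 \<le> FF m n D b" using ab by simp
    moreover have "b \<le> GG m n D (a + 1)" using ab GG_mono[of a "a+1" m n D] by simp
    ultimately have "(a + 1, b) \<in> RR m n D" by (simp add: RR_def)
    then have "val (a + 1, b) \<le> M" by (rule maxp)
    then show False using p pe n by (simp add: val_def algebra_simps)
  qed
  have c2: "FF m n D (b - 1) < FF m n D b"
  proof (rule ccontr)
    assume "\<not> ?thesis"
    then have "a \<le> FF m n D (b - 1)" using c1 by simp
    moreover have "b - 1 \<le> GG m n D a" using ab by simp
    ultimately have "(a, b - 1) \<in> RR m n D" by (simp add: RR_def)
    then have "val (a, b - 1) \<le> M" by (rule maxp)
    then show False using p pe m by (simp add: val_def algebra_simps)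
  qed
  have "\<exists>i\<in>{1..m}. (D (A i) + b) mod int n = 0"
  proof (rule ccontr)
    assume nex: "\<not> ?thesis"
    have "\<forall>i\<in>{1..m}. (D (A i) + (b - 1)) div int n = (D (A i) + b) div int n"
    proof
      fix i assume "i \<in> {1..m}"
      then have nz: "(D (A i) + b) mod int n \<noteq> 0" using nex by auto
      have e: "D (A i) + (b - 1) = (D (A i) + b) - 1" by simp
      show "(D (A i) + (b - 1)) div int n = (D (A i) + b) div int n"
        unfolding e using divm1[of "int n" "D (A i) + b"] n nz by simp
    qed
    then have "FF m n D (b - 1) = FF m n D b" unfolding FF_def by (intro sum.cong) auto
    then show False using c2 by simp
  qed
  then obtain i where i: "i \<in> {1..m}" "(D (A i) + b) mod int n = 0" by auto
  have notin: "(a, b) \<notin> RR m n (sub1 D (A i))"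
    using FF_sub_A[OF i(1) n, of D b] i(2) c1 by (simp add: RR_def)
  obtain k where k: "(a + k * int m, b + k * int n) \<in> SS m n D"
    using RR_SS[OF m n, of a b D] p pe by blast
  have "SS m n (sub1 D (A i)) \<noteq> SS m n D"
  proof
    assume eq: "SS m n (sub1 D (A i)) = SS m n D"
    then have "(a + k * int m, b + k * int n) \<in> RR m n (sub1 D (A i))"
      using k by (auto simp: SS_def)
    from RR_shift[OF m n this, of "- k"] have "(a, b) \<in> RR m n (sub1 D (A i))"
      by (simp add: algebra_simps)
    then show False using notin by simp
  qed
  then show ?thesis using i by blast
qed

lemma YY_upper:
  assumes m: "m \<ge> 1" and n: "n \<ge> 1"
  shows "\<forall>D. YY m n D = k \<longrightarrow> (\<exists>f. (\<forall>x\<in>verts m n. 0 \<le> f x) \<and> conf_degree m n f = int k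
            \<and> \<not> effective m n (\<lambda>x. D x - f x))"
proof (induction k)
  case 0
  show ?case
  proof (intro allI impI)
    fix D assume "YY m n D = 0"
    then have "SS m n D = {}" using SS_finite[OF m n] by (simp add: YY_def)
    then have "\<not> effective m n (\<lambda>x. D x - 0)" using effective_SS[OF m n] by simp
    then show "\<exists>f. (\<forall>x\<in>verts m n. 0 \<le> f x) \<and> conf_degree m n f = int 0
            \<and> \<not> effective m n (\<lambda>x. D x - f x)"
      by (intro exI[of _ "\<lambda>x. 0"]) (simp add: conf_degree_def)
  qed
next
  case (Suc k)
  show ?case
  proof (intro allI impI)
    fix D assume Y: "YY m n D = Suc k"
    then have "SS m n D \<noteq> {}" by (auto simp: YY_def)
    then obtain i where i: "i \<in> {1..m}" "SS m n (sub1 D (A i)) \<noteq> SS m n D"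
      using exists_A[OF m n] by blast
    have v: "A i \<in> verts m n" using i by (simp add: verts_def)
    have sub: "SS m n (sub1 D (A i)) \<subseteq> SS m n D" using SS_le[OF m n sub1_le] .
    have "card (SS m n (sub1 D (A i))) < card (SS m n D)"
      using sub i(2) SS_finite[OF m n] by (intro psubset_card_mono) auto
    moreover have "YY m n D \<le> YY m n (sub1 D (A i)) + 1" by (rule YY_sub[OF m n v])
    ultimately have "YY m n (sub1 D (A i)) = k" using Y by (simp add: YY_def)
    then obtain f where f: "\<forall>x\<in>verts m n. 0 \<le> f x" "conf_degree m n f = int k"
        "\<not> effective m n (\<lambda>x. sub1 D (A i) x - f x)"
      using Suc.IH by blast
    define g where "g = (\<lambda>x. f x + (if x = A i then 1 else 0))"
    have "\<forall>x\<in>verts m n. 0 \<le> g x" using f by (simp add: g_def)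
    moreover have "conf_degree m n g = int (Suc k)"
      using f(2) v by (simp add: g_def conf_degree_def sum.distrib)
    moreover have "(\<lambda>x. D x - g x) = (\<lambda>x. sub1 D (A i) x - f x)"
      by (simp add: g_def sub1_def fun_eq_iff)
    ultimately show "\<exists>f. (\<forall>x\<in>verts m n. 0 \<le> f x) \<and> conf_degree m n f = int (Suc k)
            \<and> \<not> effective m n (\<lambda>x. D x - f x)"
      using f(3) by metis
  qed
qed

lemma rank_YY:
  assumes m: "m \<ge> 1" and n: "n \<ge> 1"
  shows "conf_rank m n D = int (YY m n D) - 1"
proof -
  let ?P = "\<lambda>d::nat. \<exists>f. (\<forall>x\<in>verts m n. f x \<ge> 0)
       \<and> conf_degree m n f = int d \<and> \<not> effective m n (\<lambda>x. D x - f x)"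
  have "(LEAST d. ?P d) = YY m n D"
  proof (rule Least_equality)
    show "?P (YY m n D)" using YY_upper[OF m n] by blast
  next
    fix d assume "?P d"
    then obtain f where f: "\<forall>x\<in>verts m n. f x \<ge> 0" "conf_degree m n f = int d"
      "\<not> effective m n (\<lambda>x. D x - f x)" by blast
    have "SS m n (\<lambda>x. D x - f x) = {}" using f(3) effective_SS[OF m n] by blast
    then have "YY m n (\<lambda>x. D x - f x) = 0" by (simp add: YY_def)
    then show "YY m n D \<le> d" using YY_lower[OF m n, of d D] f by auto
  qed
  then show ?thesis unfolding conf_rank_def by simp
qed




lemma sum_ind: "finite S \<Longrightarrow> (\<Sum>i\<in>S. if P i then (c::int) else 0) = c * int (card {i\<in>S. P i})"
  by (simp add: sum.inter_filter[symmetric])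

lemma parking_bounds:
  assumes p: "parking m n u"
  shows "\<And>j. j \<in> {1..m-1} \<Longrightarrow> 0 \<le> u (A j) \<and> u (A j) < int n"
    and "\<And>j. j \<in> {1..n} \<Longrightarrow> 0 \<le> u (B j) \<and> u (B j) < int m"
proof -
  have nn: "\<forall>c\<in>verts m n - {A m}. u c \<ge> 0" using p by (simp add: parking_def)
  have single: "u v < gdeg m n v" if v: "v \<in> verts m n - {A m}" for v
  proof -
    obtain x where x: "x \<in> verts m n - {A m}" "u x - DeltaSet m n {v} x < 0"
      using p v unfolding parking_def by (metis empty_not_insert empty_subsetI insert_subset)
    have "x = v"
    proof (rule ccontr)
      assume "x \<noteq> v"
      then have "DeltaSet m n {v} x \<le> 0" by (simp add: DeltaSet_def Delta_def)
      then show False using x nn by force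
    qed
    moreover have "\<not> adj m n v v" by (auto simp: adj_def)
    ultimately show ?thesis using x by (simp add: DeltaSet_def Delta_def)
  qed
  show "0 \<le> u (A j) \<and> u (A j) < int n" if j: "j \<in> {1..m-1}" for j
  proof -
    have v: "A j \<in> verts m n - {A m}" using j by (auto simp: verts_def)
    have "j \<in> {1..m}" using j by auto
    then show ?thesis using single[OF v] nn v gdeg_A[of j m n] by auto
  qed
  show "0 \<le> u (B j) \<and> u (B j) < int m" if j: "j \<in> {1..n}" for j
  proof -
    have v: "B j \<in> verts m n - {A m}" using j by (auto simp: verts_def)
    then show ?thesis using single[OF v] nn gdeg_B[OF j, of m] by auto
  qed
qed

definition cc :: "nat \<Rightarrow> (vert \<Rightarrow> int) \<Rightarrow> nat \<Rightarrow> int" where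
  "cc m u t = int (card {j \<in> {1..m - 1}. u (A j) + 1 \<le> int (t + 1) - 1})"

lemma rvec_cc: "rvec m n u (t + 1) = u (B (t + 1)) + 1 - cc m u t"
  by (simp add: rvec_def cc_def)

lemma K1:
  assumes m: "m \<ge> 1" and n: "n \<ge> 1" and t: "t < n"
    and xb: "\<And>j. j \<in> {1..m-1} \<Longrightarrow> 0 \<le> u (A j) \<and> u (A j) < int n"
  shows "FF m n u (- int t) = (u (A m) - int t) div int n - cc m u t"
proof -
  have split: "{1..m} = insert m {1..m-1}" using m by auto
  have trm: "(u (A j) + - int t) div int n = (if u (A j) + 1 \<le> int (t + 1) - 1 then -1 else 0)"
    if j: "j \<in> {1..m-1}" for j
  proof (cases "u (A j) + 1 \<le> int (t + 1) - 1")
    case True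
    have "u (A j) + - int t = int n * (-1) + (u (A j) - int t + int n)" by simp
    then have "(u (A j) + - int t) div int n = -1"
      by (rule int_div_pos_eq) (use True xb[OF j] t in auto)
    then show ?thesis using True by simp
  next
    case False
    have "u (A j) + - int t = int n * 0 + (u (A j) - int t)" by simp
    then have "(u (A j) + - int t) div int n = 0"
      by (rule int_div_pos_eq) (use False xb[OF j] t in auto)
    then show ?thesis using False by simp
  qed
  have "FF m n u (- int t) = (u (A m) + - int t) div int n
      + (\<Sum>j\<in>{1..m-1}. (u (A j) + - int t) div int n)"
    unfolding FF_def split using m by (subst sum.insert) auto
  also have "(\<Sum>j\<in>{1..m-1}. (u (A j) + - int t) div int n)
      = (\<Sum>j\<in>{1..m-1}. if u (A j) + 1 \<le> int (t + 1) - 1 then -1 else 0)"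
    by (rule sum.cong[OF refl trm])
  also have "\<dots> = - cc m u t" by (simp add: sum_ind cc_def)
  finally show ?thesis by simp
qed

lemma div_ge_m1: "(0::int) < m \<Longrightarrow> - m \<le> z \<Longrightarrow> -1 \<le> z div m"
proof -
  assume "0 < m" "- m \<le> z"
  then have "(- m) div m \<le> z div m" by (intro zdiv_mono1) auto
  moreover have "(- m) div m = -1"
    by (rule int_div_pos_eq[of _ _ _ 0]) (use \<open>0 < m\<close> in auto)
  ultimately show ?thesis by simp
qed

lemma div_le_0: "(0::int) < m \<Longrightarrow> z < m \<Longrightarrow> z div m \<le> 0"
proof -
  assume "0 < m" "z < m"
  then have "z div m \<le> (m - 1) div m" by (intro zdiv_mono1) auto
  also have "(m - 1) div m = 0" using \<open>0 < m\<close> by (intro div_pos_pos_trivial) auto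
  finally show ?thesis .
qed

lemma K2:
  assumes m: "m \<ge> 1" and n: "n \<ge> 1" and t: "t < n"
    and yb: "\<And>j. j \<in> {1..n} \<Longrightarrow> 0 \<le> u (B j) \<and> u (B j) < int m"
    and ys: "\<And>i j. 1 \<le> i \<Longrightarrow> i \<le> j \<Longrightarrow> j \<le> n \<Longrightarrow> u (B i) \<le> u (B j)"
  shows "- int t \<le> GG m n u a \<longleftrightarrow> - u (B (t + 1)) \<le> a"
proof -
  define y where "y = u (B (t + 1))"
  have k: "t + 1 \<in> {1..n}" using t by auto
  have lowA: "- int t \<le> GG m n u (- y)"
  proof -
    have "(\<Sum>j\<in>{1..n}. if j < t + 1 then -1 else 0) \<le> GG m n u (- y)"
      unfolding GG_def
    proof (rule sum_mono)
      fix j assume j: "j \<in> {1..n}"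
      show "(if j < t + 1 then -1 else 0) \<le> (u (B j) + - y) div int m"
      proof (cases "j < t + 1")
        case True
        have "- int m \<le> u (B j) + - y" using yb[OF j] yb[OF k] unfolding y_def by linarith
        then show ?thesis using True m div_ge_m1[of "int m"] by simp
      next
        case False
        then have "y \<le> u (B j)" unfolding y_def using ys[of "t+1" j] j by auto
        then have "0 \<le> (u (B j) + - y) div int m" using m by (simp add: pos_imp_zdiv_nonneg_iff)
        then show ?thesis using False by simp
      qed
    qed
    moreover have "{j\<in>{1..n}. j < t + 1} = {1..t}" using t by auto
    ultimately show ?thesis by (simp add: sum_ind)
  qed
  have upB: "GG m n u (- y - 1) \<le> - int (t + 1)"
  proof -
    have "GG m n u (- y - 1) \<le> (\<Sum>j\<in>{1..n}. if j \<le> t + 1 then -1 else 0)"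
      unfolding GG_def
    proof (rule sum_mono)
      fix j assume j: "j \<in> {1..n}"
      show "(u (B j) + (- y - 1)) div int m \<le> (if j \<le> t + 1 then -1 else 0)"
      proof (cases "j \<le> t + 1")
        case True
        then have "u (B j) \<le> y" unfolding y_def using ys[of j "t+1"] j k by auto
        then have "(u (B j) + (- y - 1)) div int m < 0" using m by (intro div_neg_pos_less0) auto
        then show ?thesis using True by simp
      next
        case False
        have "u (B j) + (- y - 1) < int m" using yb[OF j] yb[OF k] unfolding y_def by linarith
        then show ?thesis using False m div_le_0[of "int m"] by simp
      qed
    qed
    moreover have "{j\<in>{1..n}. j \<le> t + 1} = {1..t+1}" using t by auto
    ultimately show ?thesis by (simp add: sum_ind)
  qed
  show ?thesis
  proof
    assume h: "- int t \<le> GG m n u a"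
    show "- u (B (t + 1)) \<le> a"
    proof (rule ccontr)
      assume "\<not> ?thesis"
      then have "a \<le> - y - 1" unfolding y_def by simp
      then have "GG m n u a \<le> GG m n u (- y - 1)" by (rule GG_mono)
      then show False using h upB by simp
    qed
  next
    assume "- u (B (t + 1)) \<le> a"
    then have "GG m n u (- y) \<le> GG m n u a" unfolding y_def by (intro GG_mono) simp
    then show "- int t \<le> GG m n u a" using lowA by simp
  qed
qed




lemma YY_ypara:
  assumes m: "m \<ge> 1" and n: "n \<ge> 1"
    and xb: "\<And>j. j \<in> {1..m-1} \<Longrightarrow> 0 \<le> u (A j) \<and> u (A j) < int n"
    and yb: "\<And>j. j \<in> {1..n} \<Longrightarrow> 0 \<le> u (B j) \<and> u (B j) < int m"
    and ys: "\<And>i j. 1 \<le> i \<Longrightarrow> i \<le> j \<Longrightarrow> j \<le> n \<Longrightarrow> u (B i) \<le> u (B j)"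
  shows "YY m n u = ypara m n u"
proof -
  define s where "s = u (A m)"
  define Yset where "Yset = {\<sigma> :: int. \<sigma> \<le> u (A m) \<and> is_right m n u \<sigma>}"
  define g where "g = (\<lambda>\<sigma>::int. (\<sigma> div int n - cc m u (nat (\<sigma> mod int n)), - (\<sigma> mod int n)))"
  have np: "(0::int) < int n" using n by simp
  have inj: "inj_on g Yset"
  proof (rule inj_onI)
    fix x y assume "g x = g y"
    then have e1: "x mod int n = y mod int n"
      and e2: "x div int n - cc m u (nat (x mod int n)) = y div int n - cc m u (nat (y mod int n))"
      by (auto simp: g_def)
    from e2 e1 have "x div int n = y div int n" by simp
    then show "x = y" using e1 by (metis div_mult_mod_eq)
  qed
  have "SS m n u = g ` Yset"
  proof
    show "g ` Yset \<subseteq> SS m n u"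
    proof
      fix p assume "p \<in> g ` Yset"
      then obtain \<sigma> where \<sigma>: "\<sigma> \<in> Yset" "p = g \<sigma>" by blast
      define t where "t = nat (\<sigma> mod int n)"
      define q where "q = \<sigma> div int n"
      have tt: "int t = \<sigma> mod int n" "t < n" using np by (simp_all add: t_def nat_less_iff)
      have se: "\<sigma> = int n * q + int t" using tt by (simp add: q_def)
      have le: "\<sigma> \<le> s" and rt: "q + rvec m n u (t + 1) \<ge> 1"
        using \<sigma> by (auto simp: Yset_def is_right_def s_def q_def t_def)
      have "q \<le> (s - int t) div int n"
        using le se np by (intro le_div_of_mult) auto
      then have a1: "q - cc m u t \<le> FF m n u (- int t)"
        using K1[where u=u, OF m n tt(2) xb] by (simp add: s_def)
      have "- u (B (t + 1)) \<le> q - cc m u t" using rt rvec_cc[of m n u t] by simp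
      then have a2: "- int t \<le> GG m n u (q - cc m u t)"
        using K2[where u=u, OF m n tt(2) yb ys] by simp
      have "p = (q - cc m u t, - int t)" using \<sigma>(2) tt by (simp add: g_def q_def t_def)
      then show "p \<in> SS m n u" using a1 a2 tt by (auto simp: SS_def RR_def)
    qed
  next
    show "SS m n u \<subseteq> g ` Yset"
    proof
      fix p assume p: "p \<in> SS m n u"
      obtain a b where pe: "p = (a, b)" by force
      have h: "a \<le> FF m n u b" "b \<le> GG m n u a" "1 - int n \<le> b" "b \<le> 0"
        using p pe by (auto simp: SS_def RR_def)
      define t where "t = nat (- b)"
      have tt: "int t = - b" "t < n" using h by (auto simp: t_def)
      define \<sigma> where "\<sigma> = int n * (a + cc m u t) + int t"
      have dv: "\<sigma> div int n = a + cc m u t" unfolding \<sigma>_def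
        by (rule int_div_pos_eq) (use tt in auto)
      have md: "\<sigma> mod int n = int t" unfolding \<sigma>_def
        by (rule int_mod_pos_eq) (use tt in auto)
      have bt: "b = - int t" using tt by simp
      have a1: "a \<le> (s - int t) div int n - cc m u t"
        using h(1) K1[where u=u, OF m n tt(2) xb] bt by (simp add: s_def)
      have "int n * (a + cc m u t) \<le> int n * ((s - int t) div int n)"
        using a1 np by (intro mult_left_mono) auto
      also have "\<dots> \<le> s - int t" using np by (rule mult_div_le)
      finally have le: "\<sigma> \<le> s" by (simp add: \<sigma>_def)
      have "- u (B (t + 1)) \<le> a" using K2[where u=u, OF m n tt(2) yb ys] h(2) bt by simp
      then have rt: "is_right m n u \<sigma>"
        using rvec_cc[of m n u t] by (simp add: is_right_def dv md)
      have "\<sigma> \<in> Yset" using le rt by (simp add: Yset_def s_def)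
      moreover have "g \<sigma> = p" using pe bt by (simp add: g_def dv md)
      ultimately show "p \<in> g ` Yset" by blast
    qed
  qed
  then have "YY m n u = card (g ` Yset)" by (simp add: YY_def)
  also have "\<dots> = card Yset" using inj by (rule card_image)
  finally show ?thesis by (simp add: ypara_def Yset_def)
qed




lemma column_card:
  assumes n: "n \<ge> 1" and fin: "\<And>t. t < n \<Longrightarrow> finite {q. P (int n * q + int t)}"
  shows "card {\<sigma>::int. P \<sigma>} = (\<Sum>t<n. card {q. P (int n * q + int t)})"
proof -
  define k where "k = (\<lambda>(t::nat, q::int). int n * q + int t)"
  let ?S = "SIGMA t:{..<n}. {q. P (int n * q + int t)}"
  have "bij_betw k ?S {\<sigma>. P \<sigma>}"
  proof (rule bij_betw_imageI)
    show "inj_on k ?S"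
    proof (rule inj_onI)
      fix x y assume x: "x \<in> ?S" and y: "y \<in> ?S" and e: "k x = k y"
      obtain t q where xe: "x = (t, q)" by force
      obtain t' q' where ye: "y = (t', q')" by force
      have tt: "t < n" "t' < n" using x y xe ye by auto
      have ee: "int n * q + int t = int n * q' + int t'" using e xe ye by (simp add: k_def)
      have "(int n * q + int t) mod int n = int t" by (rule int_mod_pos_eq) (use tt in auto)
      moreover have "(int n * q' + int t') mod int n = int t'" by (rule int_mod_pos_eq) (use tt in auto)
      ultimately have "t = t'" using ee by simp
      then have "q = q'" using ee n by simp
      then show "x = y" using xe ye \<open>t = t'\<close> by simp
    qed
  next
    show "k ` ?S = {\<sigma>. P \<sigma>}"
    proof
      show "k ` ?S \<subseteq> {\<sigma>. P \<sigma>}" by (auto simp: k_def)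
    next
      show "{\<sigma>. P \<sigma>} \<subseteq> k ` ?S"
      proof
        fix \<sigma> assume "\<sigma> \<in> {\<sigma>. P \<sigma>}"
        then have P: "P \<sigma>" by simp
        define t where "t = nat (\<sigma> mod int n)"
        have tt: "int t = \<sigma> mod int n" "t < n" using n by (simp_all add: t_def nat_less_iff)
        have se: "\<sigma> = int n * (\<sigma> div int n) + int t" using tt by simp
        have "(t, \<sigma> div int n) \<in> ?S" using tt P se by auto
        moreover have "k (t, \<sigma> div int n) = \<sigma>" using se by (simp add: k_def)
        ultimately show "\<sigma> \<in> k ` ?S" by force
      qed
    qed
  qed
  then have "card {\<sigma>. P \<sigma>} = card ?S" by (simp add: bij_betw_same_card)
  also have "\<dots> = (\<Sum>t<n. card {q. P (int n * q + int t)})"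
    using fin by (subst card_SigmaI) auto
  finally show ?thesis .
qed

lemma hermite:
  assumes n: "n \<ge> 1"
  shows "(\<Sum>t<n. (s - int t) div int n) = s - int n + 1"
proof -
  define q0 where "q0 = s div int n"
  define t0 where "t0 = s mod int n"
  have t0: "0 \<le> t0" "t0 < int n" using n by (simp_all add: t0_def)
  have se: "s = int n * q0 + t0" by (simp add: q0_def t0_def)
  have trm: "(s - int t) div int n = (q0 - 1) + (if int t \<le> t0 then 1 else 0)" if t: "t < n" for t
  proof (cases "int t \<le> t0")
    case True
    have "s - int t = int n * q0 + (t0 - int t)" using se by simp
    then have "(s - int t) div int n = q0" by (rule int_div_pos_eq) (use True t0 in auto)
    then show ?thesis using True by simp
  next
    case False
    have "s - int t = int n * (q0 - 1) + (t0 - int t + int n)" using se by (simp add: algebra_simps)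
    then have "(s - int t) div int n = q0 - 1" by (rule int_div_pos_eq) (use False t t0 in auto)
    then show ?thesis using False by simp
  qed
  have "(\<Sum>t<n. (s - int t) div int n) = (\<Sum>t<n. (q0 - 1) + (if int t \<le> t0 then 1 else 0))"
    by (rule sum.cong) (simp_all add: trm)
  also have "\<dots> = int n * (q0 - 1) + int (card {t\<in>{..<n}. int t \<le> t0})"
    by (simp add: sum.distrib sum_ind)
  also have "{t\<in>{..<n}. int t \<le> t0} = {..nat t0}" using t0 by auto
  also have "int (card {..nat t0}) = t0 + 1" using t0 by simp
  finally show ?thesis using se by (simp add: algebra_simps)
qed

lemma sum_cc:
  assumes n: "n \<ge> 1"
    and xb: "\<And>j. j \<in> {1..m-1} \<Longrightarrow> 0 \<le> u (A j) \<and> u (A j) < int n"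
  shows "(\<Sum>t<n. cc m u t) = (\<Sum>j\<in>{1..m-1}. int n - 1 - u (A j))"
proof -
  have "(\<Sum>t<n. cc m u t) = (\<Sum>t<n. \<Sum>j\<in>{1..m-1}. if u (A j) + 1 \<le> int (t + 1) - 1 then 1 else 0)"
    by (rule sum.cong) (simp_all add: cc_def sum_ind)
  also have "\<dots> = (\<Sum>j\<in>{1..m-1}. \<Sum>t<n. if u (A j) + 1 \<le> int (t + 1) - 1 then 1 else 0)"
    by (rule sum.swap)
  also have "\<dots> = (\<Sum>j\<in>{1..m-1}. int n - 1 - u (A j))"
  proof (rule sum.cong)
    fix j assume j: "j \<in> {1..m-1}"
    have "(\<Sum>t<n. if u (A j) + 1 \<le> int (t + 1) - 1 then 1 else (0::int))
        = int (card {t\<in>{..<n}. u (A j) + 1 \<le> int (t + 1) - 1})"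
      by (simp add: sum_ind)
    also have "{t\<in>{..<n}. u (A j) + 1 \<le> int (t + 1) - 1} = {nat (u (A j)) + 1..<n}"
      using xb[OF j] by auto
    also have "int (card {nat (u (A j)) + 1..<n}) = int n - 1 - u (A j)"
    proof -
      have "Suc (nat (u (A j))) \<le> n" using xb[OF j] by linarith
      then show ?thesis using xb[OF j] by (simp add: of_nat_diff)
    qed
    finally show "(\<Sum>t<n. if u (A j) + 1 \<le> int (t + 1) - 1 then 1 else (0::int)) = int n - 1 - u (A j)" .
  qed simp
  finally show ?thesis .
qed




lemma le_iff_div: "(0::int) < n \<Longrightarrow> n * q + t \<le> s \<longleftrightarrow> q \<le> (s - t) div n"
proof
  assume "0 < n" "n * q + t \<le> s"
  then show "q \<le> (s - t) div n" by (intro le_div_of_mult) auto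
next
  assume n: "0 < n" and "q \<le> (s - t) div n"
  then have "n * q \<le> n * ((s - t) div n)" by (simp add: mult_left_mono)
  also have "\<dots> \<le> s - t" using n by (rule mult_div_le)
  finally show "n * q + t \<le> s" by simp
qed

theorem main:
  fixes m n :: nat and u :: "vert \<Rightarrow> int"
  assumes m: "m \<ge> 1" and n: "n \<ge> 1"
    and pk: "parking m n u" and so: "sorted_conf m n u"
  shows "int (xpara m n u) = (int m - 1) * (int n - 1) + conf_rank m n u - conf_degree m n u
         \<and> int (ypara m n u) = conf_rank m n u + 1"
proof -
  note xb = parking_bounds(1)[OF pk]
  note yb = parking_bounds(2)[OF pk]
  have ys: "\<And>i j. 1 \<le> i \<Longrightarrow> i \<le> j \<Longrightarrow> j \<le> n \<Longrightarrow> u (B i) \<le> u (B j)"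
    using so by (simp add: sorted_conf_def)
  have rk: "conf_rank m n u = int (ypara m n u) - 1"
    using rank_YY[OF m n, of u] YY_ypara[OF m n xb yb ys] by simp
  define s where "s = u (A m)"
  define e where "e = (\<lambda>t::nat. (s - int t) div int n + rvec m n u (t + 1))"
  have np: "(0::int) < int n" using n by simp
  have dm: "(int n * q + int t) div int n = q" "(int n * q + int t) mod int n = int t"
    if "t < n" for q t
    using that by (auto intro: int_div_pos_eq int_mod_pos_eq)
  have ycol: "{q. int n * q + int t \<le> u (A m) \<and> is_right m n u (int n * q + int t)}
      = {1 - rvec m n u (t + 1) .. (s - int t) div int n}" if t: "t < n" for t
    using dm[OF t] le_iff_div[OF np] by (auto simp: is_right_def s_def)
  have xcol: "{q. int n * q + int t > u (A m) \<and> \<not> is_right m n u (int n * q + int t)}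
      = {(s - int t) div int n + 1 .. - rvec m n u (t + 1)}" if t: "t < n" for t
    using dm[OF t] le_iff_div[OF np] by (auto simp: is_right_def s_def not_less[symmetric])
  have yp: "ypara m n u = (\<Sum>t<n. nat (e t))"
  proof -
    have "ypara m n u = (\<Sum>t<n. card {q. int n * q + int t \<le> u (A m) \<and> is_right m n u (int n * q + int t)})"
      unfolding ypara_def
      by (rule column_card[OF n, where P = "\<lambda>\<sigma>. \<sigma> \<le> u (A m) \<and> is_right m n u \<sigma>"])
         (simp add: ycol)
    also have "\<dots> = (\<Sum>t<n. nat (e t))"
      by (rule sum.cong) (auto simp: ycol e_def)
    finally show ?thesis .
  qed
  have xp: "xpara m n u = (\<Sum>t<n. nat (- e t))"
  proof -
    have "xpara m n u = (\<Sum>t<n. card {q. int n * q + int t > u (A m) \<and> \<not> is_right m n u (int n * q + int t)})"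
      unfolding xpara_def
      by (rule column_card[OF n, where P = "\<lambda>\<sigma>. \<sigma> > u (A m) \<and> \<not> is_right m n u \<sigma>"])
         (simp add: xcol)
    also have "\<dots> = (\<Sum>t<n. nat (- e t))"
      by (rule sum.cong) (auto simp: xcol e_def)
    finally show ?thesis .
  qed
  have diff: "int (xpara m n u) - int (ypara m n u) = - (\<Sum>t<n. e t)"
  proof -
    have "int (xpara m n u) - int (ypara m n u) = (\<Sum>t<n. int (nat (- e t)) - int (nat (e t)))"
      by (simp add: xp yp sum_subtractf)
    also have "\<dots> = (\<Sum>t<n. - e t)" by (rule sum.cong) auto
    finally show ?thesis by (simp add: sum_negf)
  qed
  have sy: "(\<Sum>t<n. u (B (t + 1))) = (\<Sum>j\<in>{1..n}. u (B j))"
    using sum.atLeast1_atMost_eq[of "\<lambda>j. u (B j)" n] by simp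
  have se: "(\<Sum>t<n. e t) = s - int n + 1 + (\<Sum>j\<in>{1..n}. u (B j)) + int n - (\<Sum>t<n. cc m u t)"
  proof -
    have "(\<Sum>t<n. e t) = (\<Sum>t<n. (s - int t) div int n) + (\<Sum>t<n. u (B (t + 1)) + 1 - cc m u t)"
      using rvec_cc[of m n u] by (simp add: e_def sum.distrib)
    also have "(\<Sum>t<n. u (B (t + 1)) + 1 - cc m u t) = (\<Sum>t<n. u (B (t + 1))) + int n - (\<Sum>t<n. cc m u t)"
      by (simp add: sum.distrib sum_subtractf)
    finally show ?thesis using hermite[OF n, of s] sy by simp
  qed
  have scc: "(\<Sum>t<n. cc m u t) = (int m - 1) * (int n - 1) - (\<Sum>j\<in>{1..m-1}. u (A j))"
  proof -
    have "(\<Sum>t<n. cc m u t) = (\<Sum>j\<in>{1..m-1}. int n - 1 - u (A j))" by (rule sum_cc[where u=u and m=m, OF n xb])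
    also have "\<dots> = int (m - 1) * (int n - 1) - (\<Sum>j\<in>{1..m-1}. u (A j))"
      by (simp add: sum_subtractf)
    finally show ?thesis using m by (simp add: of_nat_diff)
  qed
  have deg: "conf_degree m n u = s + (\<Sum>j\<in>{1..m-1}. u (A j)) + (\<Sum>j\<in>{1..n}. u (B j))"
  proof -
    have split: "{1..m} = insert m {1..m-1}" using m by auto
    have "(\<Sum>i\<in>{1..m}. u (A i)) = s + (\<Sum>j\<in>{1..m-1}. u (A j))"
      unfolding split s_def using m by (subst sum.insert) auto
    then show ?thesis by (simp add: conf_degree_def sum_verts)
  qed
  show ?thesis
    using diff se scc deg rk by (simp add: algebra_simps)
qed


theorem lemma13p1:
  fixes m n :: nat and u :: "vert \<Rightarrow> int"
  assumes "m \<ge> 1" and "n \<ge> 1"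
    and "parking m n u" and "sorted_conf m n u"
  shows "int (xpara m n u) = (int m - 1) * (int n - 1) + conf_rank m n u - conf_degree m n u
         \<and> int (ypara m n u) = conf_rank m n u + 1"
  using main[OF assms] .

end
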